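(* Let $L$ be a bounded distributive lattice and $m\colon 2^{[n]}\to L$ an $L$-valued capacity. Then the Sugeno integral $\mathsf{Su}_m$ is inf-homogeneous and g-comonotone supremal, and it is also sup-homogeneous and g-comonotone infimal.
   Context: $[n]=\{1,\dots,n\}$; $0,1$ are bottom and top of $L$. An $L$-valued capacity is $m\colon 2^{[n]}\to L$, monotone w.r.t. inclusion, with $m(\emptyset)=0$, $m([n])=1$. $\mathsf{Su}_m(\mathbf x)=\bigvee_{I\subseteq[n]}\big(m(I)\wedge\bigwedge_{i\in I}x_i\big)=\bigwedge_{I\subseteq[n]}\big(m([n]\setminus I)\vee\bigvee_{i\in I}x_i\big)$ (empty meet $=1$, empty join $=0$). For $c\in L$, $\mathbf c=(c,\dots,c)$; operations on vectors are componentwise. $f\colon L^n\to L$ is inf-homogeneous if $f(\mathbf c\wedge\mathbf x)=c\wedge f(\mathbf x)$ and sup-homogeneous if $f(\mathbf c\vee\mathbf x)=c\vee f(\mathbf x)$, for all $\mathbf x\in L^n$, $c\in L$. $\mathbf x,\mathbf y$ are g-comonotone if for all $i,j$: $(x_i\vee y_i)\wedge(x_j\vee y_j)=(x_i\wedge x_j)\vee(y_i\wedge y_j)$. $f$ is g-comonotone supremal (resp. infimal) if $f(\mathbf x\vee\mathbf y)=f(\mathbf x)\vee f(\mathbf y)$ (resp. $f(\mathbf x\wedge\mathbf y)=f(\mathbf x)\wedge f(\mathbf y)$) for all g-comonotone $\mathbf x,\mathbf y$. *)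

theory Defs
  imports Main
begin

text \<open>Vectors in L^n are represented as functions nat => L, of which only the
components 1..n matter. Subsets of [n] are sets of naturals contained in {1..n}.\<close>

definition capacity :: "nat \<Rightarrow> (nat set \<Rightarrow> 'a::bounded_lattice) \<Rightarrow> bool" where
  "capacity n m \<longleftrightarrow>
     (\<forall>I J. I \<subseteq> J \<longrightarrow> J \<subseteq> {1..n} \<longrightarrow> m I \<le> m J) \<and>
     m {} = bot \<and> m {1..n} = top"

text \<open>Finite meet with the convention that the empty meet is top.\<close>
definition meet_set :: "'a::bounded_lattice set \<Rightarrow> 'a" where
  "meet_set A = Inf_fin (insert top A)"

definition sugeno :: "nat \<Rightarrow> (nat set \<Rightarrow> 'a::bounded_lattice) \<Rightarrow> (nat \<Rightarrow> 'a) \<Rightarrow> 'a" where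
  "sugeno n m x = Sup_fin ((\<lambda>I. inf (m I) (meet_set (x ` I))) ` Pow {1..n})"

definition const_vec :: "'a \<Rightarrow> nat \<Rightarrow> 'a" where
  "const_vec c = (\<lambda>i. c)"

definition inf_homogeneous :: "nat \<Rightarrow> ((nat \<Rightarrow> 'a::lattice) \<Rightarrow> 'a) \<Rightarrow> bool" where
  "inf_homogeneous n f \<longleftrightarrow> (\<forall>x c. f (\<lambda>i. inf (const_vec c i) (x i)) = inf c (f x))"

definition sup_homogeneous :: "nat \<Rightarrow> ((nat \<Rightarrow> 'a::lattice) \<Rightarrow> 'a) \<Rightarrow> bool" where
  "sup_homogeneous n f \<longleftrightarrow> (\<forall>x c. f (\<lambda>i. sup (const_vec c i) (x i)) = sup c (f x))"

definition g_comonotone :: "nat \<Rightarrow> (nat \<Rightarrow> 'a::lattice) \<Rightarrow> (nat \<Rightarrow> 'a) \<Rightarrow> bool" where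
  "g_comonotone n x y \<longleftrightarrow> (\<forall>i\<in>{1..n}. \<forall>j\<in>{1..n}.
     inf (sup (x i) (y i)) (sup (x j) (y j)) = sup (inf (x i) (x j)) (inf (y i) (y j)))"

definition g_comonotone_supremal :: "nat \<Rightarrow> ((nat \<Rightarrow> 'a::lattice) \<Rightarrow> 'a) \<Rightarrow> bool" where
  "g_comonotone_supremal n f \<longleftrightarrow>
     (\<forall>x y. g_comonotone n x y \<longrightarrow> f (\<lambda>i. sup (x i) (y i)) = sup (f x) (f y))"

definition g_comonotone_infimal :: "nat \<Rightarrow> ((nat \<Rightarrow> 'a::lattice) \<Rightarrow> 'a) \<Rightarrow> bool" where
  "g_comonotone_infimal n f \<longleftrightarrow>
     (\<forall>x y. g_comonotone n x y \<longrightarrow> f (\<lambda>i. inf (x i) (y i)) = inf (f x) (f y))"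

end

theory Submission
  imports Defs
begin

lemma ms_ge:
  fixes A :: "'a::bounded_lattice set"
  assumes "finite A" shows "z \<le> meet_set A \<longleftrightarrow> (\<forall>a\<in>A. z \<le> a)"
  using assms unfolding meet_set_def by (simp add: Inf_fin.bounded_iff)

lemma ms_insert:
  fixes A :: "'a::bounded_lattice set"
  assumes "finite A" shows "meet_set (insert a A) = inf a (meet_set A)"
  using assms unfolding meet_set_def
  by (metis Inf_fin.insert empty_not_insert finite.insertI insert_commute)

lemma D2:
  fixes p :: "'a::{distrib_lattice,bounded_lattice}"
  assumes "finite J" "\<forall>j\<in>J. z \<le> sup p (q j)"
  shows "z \<le> sup p (meet_set (q ` J))"
  using assms
proof (induction J rule: finite_induct)
  case empty
  then show ?case by (simp add: meet_set_def)
next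
  case (insert k J)
  have "z \<le> inf (sup p (q k)) (sup p (meet_set (q ` J)))" using insert by simp
  also have "\<dots> = sup p (inf (q k) (meet_set (q ` J)))" by (simp add: sup_inf_distrib1)
  also have "\<dots> = sup p (meet_set (q ` insert k J))" using insert by (simp add: ms_insert)
  finally show ?case .
qed

lemma DL:
  fixes p :: "nat \<Rightarrow> 'a::{distrib_lattice,bounded_lattice}"
  assumes "finite I" "finite J" "\<forall>i\<in>I. \<forall>j\<in>J. z \<le> sup (p i) (q j)"
  shows "z \<le> sup (meet_set (p ` I)) (meet_set (q ` J))"
proof -
  have "\<forall>i\<in>I. z \<le> sup (meet_set (q ` J)) (p i)"
  proof
    fix i assume "i \<in> I"
    then have "z \<le> sup (p i) (meet_set (q ` J))" using D2[OF assms(2), of z "p i" q] assms(3) by auto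
    then show "z \<le> sup (meet_set (q ` J)) (p i)" by (simp add: sup_commute)
  qed
  from D2[OF assms(1) this] show ?thesis by (simp add: sup_commute)
qed

lemma D1:
  fixes c :: "'a::{distrib_lattice,bounded_lattice}"
  assumes "finite S" "S \<noteq> {}" "\<forall>s\<in>S. inf c s \<le> z"
  shows "inf c (Sup_fin S) \<le> z"
  using assms
proof (induction S rule: finite_ne_induct)
  case (singleton x)
  then show ?case by simp
next
  case (insert x F)
  then show ?case by (simp add: Sup_fin.insert inf_sup_distrib1)
qed

lemma Su_upper:
  fixes m :: "nat set \<Rightarrow> 'a::{distrib_lattice,bounded_lattice}"
  assumes "I \<subseteq> {1..n}"
  shows "inf (m I) (meet_set (x ` I)) \<le> sugeno n m x"
  unfolding sugeno_def using assms by (intro Sup_fin.coboundedI) auto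

lemma Su_least:
  fixes m :: "nat set \<Rightarrow> 'a::{distrib_lattice,bounded_lattice}"
  assumes "\<And>I. I \<subseteq> {1..n} \<Longrightarrow> inf (m I) (meet_set (x ` I)) \<le> z"
  shows "sugeno n m x \<le> z"
  unfolding sugeno_def using assms by (intro Sup_fin.boundedI) auto

lemma Su_mono:
  fixes m :: "nat set \<Rightarrow> 'a::{distrib_lattice,bounded_lattice}"
  assumes "\<And>i. i \<in> {1..n} \<Longrightarrow> x i \<le> y i"
  shows "sugeno n m x \<le> sugeno n m y"
proof (rule Su_least)
  fix I assume I: "I \<subseteq> {1..n}"
  have fin: "finite I" using I finite_subset by blast
  have "meet_set (x ` I) \<le> meet_set (y ` I)"
    unfolding ms_ge[OF finite_imageI[OF fin]]
  proof
    fix b assume "b \<in> y ` I"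
    then obtain i where i: "i \<in> I" "b = y i" by auto
    have "meet_set (x ` I) \<le> x i" using i fin ms_ge[of "x ` I" "meet_set (x ` I)"] by auto
    also have "\<dots> \<le> y i" using assms I i by auto
    finally show "meet_set (x ` I) \<le> b" using i by simp
  qed
  then have "inf (m I) (meet_set (x ` I)) \<le> inf (m I) (meet_set (y ` I))"
    by (simp add: inf.coboundedI2)
  also have "\<dots> \<le> sugeno n m y" using Su_upper[OF I] .
  finally show "inf (m I) (meet_set (x ` I)) \<le> sugeno n m y" .
qed

lemma ms_le:
  fixes A :: "'a::bounded_lattice set"
  assumes "finite A" "a \<in> A" shows "meet_set A \<le> a"
  using ms_ge[OF assms(1), of "meet_set A"] assms by auto

lemma ms_le':
  fixes f :: "nat \<Rightarrow> 'a::bounded_lattice"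
  assumes "finite I" "i \<in> I" shows "meet_set (f ` I) \<le> f i"
  using ms_le[OF finite_imageI[OF assms(1)], of "f i" f] assms by auto

lemma ms_inf:
  fixes f :: "nat \<Rightarrow> 'a::bounded_lattice"
  assumes "finite I"
  shows "inf (meet_set (f ` I)) (meet_set (g ` I)) \<le> meet_set ((\<lambda>i. inf (f i) (g i)) ` I)"
proof -
  have "\<forall>i\<in>I. inf (meet_set (f ` I)) (meet_set (g ` I)) \<le> inf (f i) (g i)"
  proof
    fix i assume "i \<in> I"
    then have "meet_set (f ` I) \<le> f i" "meet_set (g ` I) \<le> g i" using ms_le'[OF assms] by auto
    then show "inf (meet_set (f ` I)) (meet_set (g ` I)) \<le> inf (f i) (g i)" by (rule inf_mono)
  qed
  then show ?thesis unfolding ms_ge[OF finite_imageI[OF assms]] by auto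
qed

theorem lemma3:
  fixes n :: nat and m :: "nat set \<Rightarrow> 'a::{distrib_lattice, bounded_lattice}"
  assumes "capacity n m"
  shows "inf_homogeneous n (sugeno n m) \<and> g_comonotone_supremal n (sugeno n m) \<and>
         sup_homogeneous n (sugeno n m) \<and> g_comonotone_infimal n (sugeno n m)"
proof -
  have m0: "m {} = bot" and m1: "m {1..n} = top" using assms by (auto simp: capacity_def)
  have finI: "finite I" if "I \<subseteq> {1..n}" for I :: "nat set" using that finite_subset by blast
  have P1: "inf_homogeneous n (sugeno n m)"
    unfolding inf_homogeneous_def const_vec_def
  proof (intro allI antisym)
    fix x :: "nat \<Rightarrow> 'a" and c
    show "sugeno n m (\<lambda>i. inf c (x i)) \<le> inf c (sugeno n m x)"
    proof (rule le_infI)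
      show "sugeno n m (\<lambda>i. inf c (x i)) \<le> c"
      proof (rule Su_least)
        fix I assume I: "I \<subseteq> {1..n}"
        show "inf (m I) (meet_set ((\<lambda>i. inf c (x i)) ` I)) \<le> c"
        proof (cases "I = {}")
          case True then show ?thesis using m0 by simp
        next
          case False
          then obtain i where "i \<in> I" by auto
          then have "meet_set ((\<lambda>i. inf c (x i)) ` I) \<le> inf c (x i)"
            using ms_le'[OF finI[OF I], of i "\<lambda>i. inf c (x i)"] by auto
          then show ?thesis by (meson inf.coboundedI2 le_infE)
        qed
      qed
      show "sugeno n m (\<lambda>i. inf c (x i)) \<le> sugeno n m x" by (rule Su_mono) simp
    qed
    show "inf c (sugeno n m x) \<le> sugeno n m (\<lambda>i. inf c (x i))"
      unfolding sugeno_def[of n m x]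
    proof (rule D1)
      show "finite ((\<lambda>I. inf (m I) (meet_set (x ` I))) ` Pow {1..n})" by simp
      show "(\<lambda>I. inf (m I) (meet_set (x ` I))) ` Pow {1..n} \<noteq> {}" by blast
      show "\<forall>s\<in>(\<lambda>I. inf (m I) (meet_set (x ` I))) ` Pow {1..n}. inf c s \<le> sugeno n m (\<lambda>i. inf c (x i))"
      proof
      fix s assume "s \<in> (\<lambda>I. inf (m I) (meet_set (x ` I))) ` Pow {1..n}"
      then obtain I where I: "I \<subseteq> {1..n}" "s = inf (m I) (meet_set (x ` I))" by auto
      have "inf c (meet_set (x ` I)) \<le> meet_set ((\<lambda>i. inf c (x i)) ` I)"
        unfolding ms_ge[OF finite_imageI[OF finI[OF I(1)]]]
        using ms_le[OF finite_imageI[OF finI[OF I(1)]]]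
        by (auto intro: inf.coboundedI2 simp: le_infI1)
      then have "inf c s \<le> inf (m I) (meet_set ((\<lambda>i. inf c (x i)) ` I))"
        using I(2) by (metis inf.cobounded1 inf.coboundedI2 inf.left_commute le_inf_iff)
      also have "\<dots> \<le> sugeno n m (\<lambda>i. inf c (x i))" by (rule Su_upper[OF I(1)])
      finally show "inf c s \<le> sugeno n m (\<lambda>i. inf c (x i))" .
    qed
    qed
  qed
  have P2: "g_comonotone_supremal n (sugeno n m)"
    unfolding g_comonotone_supremal_def
  proof (intro allI impI antisym)
    fix x y :: "nat \<Rightarrow> 'a" assume com: "g_comonotone n x y"
    show "sup (sugeno n m x) (sugeno n m y) \<le> sugeno n m (\<lambda>i. sup (x i) (y i))"
      by (intro sup_least Su_mono) auto
    show "sugeno n m (\<lambda>i. sup (x i) (y i)) \<le> sup (sugeno n m x) (sugeno n m y)"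
    proof (rule Su_least)
      fix I assume I: "I \<subseteq> {1..n}"
      define b where "b = inf (m I) (meet_set ((\<lambda>i. sup (x i) (y i)) ` I))"
      have "b \<le> sup (meet_set (x ` I)) (meet_set (y ` I))"
      proof (rule DL[OF finI[OF I] finI[OF I]], intro ballI)
        fix i j assume ij: "i \<in> I" "j \<in> I"
        have "b \<le> inf (sup (x i) (y i)) (sup (x j) (y j))"
          unfolding b_def using ms_le'[OF finI[OF I] ij(1), of "\<lambda>i. sup (x i) (y i)"]
            ms_le'[OF finI[OF I] ij(2), of "\<lambda>i. sup (x i) (y i)"]
          by (meson inf.coboundedI2 le_inf_iff)
        also have "\<dots> = sup (inf (x i) (x j)) (inf (y i) (y j))"
          using com ij I unfolding g_comonotone_def by blast
        also have "\<dots> \<le> sup (x i) (y j)" by (meson inf.cobounded1 inf.cobounded2 sup.mono)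
        finally show "b \<le> sup (x i) (y j)" .
      qed
      moreover have "b \<le> m I" unfolding b_def by simp
      ultimately have "b \<le> inf (m I) (sup (meet_set (x ` I)) (meet_set (y ` I)))" by simp
      also have "\<dots> = sup (inf (m I) (meet_set (x ` I))) (inf (m I) (meet_set (y ` I)))"
        by (simp add: inf_sup_distrib1)
      also have "\<dots> \<le> sup (sugeno n m x) (sugeno n m y)"
        using Su_upper[OF I] by (meson sup.mono)
      finally show "inf (m I) (meet_set ((\<lambda>i. sup (x i) (y i)) ` I)) \<le> sup (sugeno n m x) (sugeno n m y)"
        unfolding b_def .
    qed
  qed
  have P3: "sup_homogeneous n (sugeno n m)"
    unfolding sup_homogeneous_def const_vec_def
  proof (intro allI antisym)
    fix x :: "nat \<Rightarrow> 'a" and c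
    show "sup c (sugeno n m x) \<le> sugeno n m (\<lambda>i. sup c (x i))"
    proof (rule sup_least)
      have "c \<le> meet_set ((\<lambda>i. sup c (x i)) ` {1..n})"
        by (subst ms_ge) auto
      then have "c \<le> inf (m {1..n}) (meet_set ((\<lambda>i. sup c (x i)) ` {1..n}))" using m1 by simp
      also have "\<dots> \<le> sugeno n m (\<lambda>i. sup c (x i))" by (rule Su_upper) simp
      finally show "c \<le> sugeno n m (\<lambda>i. sup c (x i))" .
      show "sugeno n m x \<le> sugeno n m (\<lambda>i. sup c (x i))" by (rule Su_mono) simp
    qed
    show "sugeno n m (\<lambda>i. sup c (x i)) \<le> sup c (sugeno n m x)"
    proof (rule Su_least)
      fix I assume I: "I \<subseteq> {1..n}"
      have "meet_set ((\<lambda>i. sup c (x i)) ` I) \<le> sup c (meet_set (x ` I))"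
        by (rule D2[OF finI[OF I]]) (auto intro: ms_le'[OF finI[OF I]])
      then have "inf (m I) (meet_set ((\<lambda>i. sup c (x i)) ` I)) \<le> inf (m I) (sup c (meet_set (x ` I)))"
        by (meson inf_mono order_refl)
      also have "\<dots> \<le> sup c (inf (m I) (meet_set (x ` I)))"
        unfolding inf_sup_distrib1 by (rule sup_mono) simp_all
      also have "\<dots> \<le> sup c (sugeno n m x)" using Su_upper[OF I] by (meson sup.mono order_refl)
      finally show "inf (m I) (meet_set ((\<lambda>i. sup c (x i)) ` I)) \<le> sup c (sugeno n m x)" .
    qed
  qed
  have P4: "g_comonotone_infimal n (sugeno n m)"
    unfolding g_comonotone_infimal_def
  proof (intro allI impI antisym)
    fix x y :: "nat \<Rightarrow> 'a" assume com: "g_comonotone n x y"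
    define xy where "xy = (\<lambda>i. inf (x i) (y i))"
    show "sugeno n m (\<lambda>i. inf (x i) (y i)) \<le> inf (sugeno n m x) (sugeno n m y)"
      by (intro le_infI Su_mono) auto
    have key: "inf (inf (m I) (meet_set (x ` I))) (inf (m J) (meet_set (y ` J))) \<le> sugeno n m xy"
      if I: "I \<subseteq> {1..n}" and J: "J \<subseteq> {1..n}" for I J
    proof -
      define a where "a = inf (inf (m I) (meet_set (x ` I))) (inf (m J) (meet_set (y ` J)))"
      have "a \<le> sup (meet_set (x ` J)) (meet_set (y ` I))"
      proof (rule DL[OF finI[OF J] finI[OF I]], intro ballI)
        fix j i assume ji: "j \<in> J" "i \<in> I"
        have "a \<le> inf (x i) (y j)"
          unfolding a_def using ms_le'[OF finI[OF I] ji(2), of x] ms_le'[OF finI[OF J] ji(1), of y]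
          by (meson inf.coboundedI2 inf.coboundedI1 le_inf_iff)
        also have "\<dots> \<le> inf (sup (x i) (y i)) (sup (x j) (y j))"
          by (meson inf_mono sup.cobounded1 sup.cobounded2)
        also have "\<dots> = sup (inf (x i) (x j)) (inf (y i) (y j))"
          using com ji I J unfolding g_comonotone_def by blast
        also have "\<dots> \<le> sup (x j) (y i)" by (meson inf.cobounded1 inf.cobounded2 sup.mono)
        finally show "a \<le> sup (x j) (y i)" .
      qed
      then have "a = sup (inf a (meet_set (x ` J))) (inf a (meet_set (y ` I)))"
        by (simp add: inf.absorb1 flip: inf_sup_distrib1)
      also have "\<dots> \<le> sup (inf (m J) (meet_set (xy ` J))) (inf (m I) (meet_set (xy ` I)))"
      proof (rule sup.mono)
        have aJ: "a \<le> inf (m J) (meet_set (y ` J))" unfolding a_def by (rule inf.cobounded2)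
        have aI: "a \<le> inf (m I) (meet_set (x ` I))" unfolding a_def by (rule inf.cobounded1)
        have "inf a (meet_set (x ` J)) \<le> inf (inf (m J) (meet_set (y ` J))) (meet_set (x ` J))"
          by (rule inf_mono[OF aJ order_refl])
        also have "\<dots> = inf (m J) (inf (meet_set (x ` J)) (meet_set (y ` J)))" by (simp add: inf.assoc inf.commute inf.left_commute)
        also have "\<dots> \<le> inf (m J) (meet_set (xy ` J))"
          unfolding xy_def by (rule inf_mono[OF order_refl ms_inf[OF finI[OF J]]])
        finally show "inf a (meet_set (x ` J)) \<le> inf (m J) (meet_set (xy ` J))" .
        have "inf a (meet_set (y ` I)) \<le> inf (inf (m I) (meet_set (x ` I))) (meet_set (y ` I))"
          by (rule inf_mono[OF aI order_refl])
        also have "\<dots> = inf (m I) (inf (meet_set (x ` I)) (meet_set (y ` I)))" by (simp add: inf.assoc inf.commute inf.left_commute)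
        also have "\<dots> \<le> inf (m I) (meet_set (xy ` I))"
          unfolding xy_def by (rule inf_mono[OF order_refl ms_inf[OF finI[OF I]]])
        finally show "inf a (meet_set (y ` I)) \<le> inf (m I) (meet_set (xy ` I))" .
      qed
      also have "\<dots> \<le> sugeno n m xy" using Su_upper[OF I, of m xy] Su_upper[OF J, of m xy] by simp
      finally show ?thesis unfolding a_def .
    qed
    have inner: "inf s (sugeno n m y) \<le> sugeno n m xy"
      if I: "I \<subseteq> {1..n}" and s: "s = inf (m I) (meet_set (x ` I))" for I s
      unfolding sugeno_def[of n m y]
    proof (rule D1)
      show "finite ((\<lambda>I. inf (m I) (meet_set (y ` I))) ` Pow {1..n})" by simp
      show "(\<lambda>I. inf (m I) (meet_set (y ` I))) ` Pow {1..n} \<noteq> {}" by blast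
      show "\<forall>t\<in>(\<lambda>I. inf (m I) (meet_set (y ` I))) ` Pow {1..n}. inf s t \<le> sugeno n m xy"
        using key[OF I] s by auto
    qed
    have "inf (sugeno n m y) (sugeno n m x) \<le> sugeno n m xy"
      unfolding sugeno_def[of n m x]
    proof (rule D1)
      show "finite ((\<lambda>I. inf (m I) (meet_set (x ` I))) ` Pow {1..n})" by simp
      show "(\<lambda>I. inf (m I) (meet_set (x ` I))) ` Pow {1..n} \<noteq> {}" by blast
      show "\<forall>t\<in>(\<lambda>I. inf (m I) (meet_set (x ` I))) ` Pow {1..n}. inf (sugeno n m y) t \<le> sugeno n m xy"
        using inner by (auto simp: inf_commute)
    qed
    then have "inf (sugeno n m x) (sugeno n m y) \<le> sugeno n m xy" by (simp add: inf_commute)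
    then show "inf (sugeno n m x) (sugeno n m y) \<le> sugeno n m (\<lambda>i. inf (x i) (y i))"
      unfolding xy_def .
  qed
  show ?thesis using P1 P2 P3 P4 by blast
qed

end
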